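(* Let $\alpha\geq 1$ be a real number. If a connected $(n,m)$-graph $G$ has maximum value of $\chi_\alpha$ among all connected $(n,m)$-graphs, then the maximum vertex degree in $G$ is $n-1$.
   Context: All graphs are finite, simple, undirected and connected; an $(n,m)$-graph has $n$ vertices and $m$ edges. The general sum-connectivity index is $\chi_\alpha(G)=\sum_{uv\in E(G)}(d_u+d_v)^\alpha$, where $d_u$ is the degree of vertex $u$. *)

theory Defs
  imports "HOL-Analysis.Analysis"
begin

definition simple_graph :: "'a set \<Rightarrow> 'a set set \<Rightarrow> bool" where
  "simple_graph V E \<longleftrightarrow> finite V \<and> (\<forall>e\<in>E. e \<subseteq> V \<and> card e = 2)"

definition adj :: "'a set set \<Rightarrow> 'a \<Rightarrow> 'a \<Rightarrow> bool" where
  "adj E u v \<longleftrightarrow> {u, v} \<in> E"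

definition connected_graph :: "'a set \<Rightarrow> 'a set set \<Rightarrow> bool" where
  "connected_graph V E \<longleftrightarrow> simple_graph V E \<and> V \<noteq> {} \<and>
     (\<forall>u\<in>V. \<forall>v\<in>V. (adj E)\<^sup>*\<^sup>* u v)"

definition degree :: "'a set set \<Rightarrow> 'a \<Rightarrow> nat" where
  "degree E v = card {e \<in> E. v \<in> e}"

definition chi :: "real \<Rightarrow> 'a set set \<Rightarrow> real" where
  "chi \<alpha> E = (\<Sum>e\<in>E. (real (\<Sum>v\<in>e. degree E v)) powr \<alpha>)"

definition max_degree :: "'a set \<Rightarrow> 'a set set \<Rightarrow> nat" where
  "max_degree V E = Max (degree E ` V)"

end

theory Submission
  imports Defs
begin

lemma conv_powr:
  fixes a b k \<alpha> :: real
  assumes "1 \<le> \<alpha>" "0 < b - k" "b \<le> a" "0 \<le> k"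
  shows "b powr \<alpha> - (b-k) powr \<alpha> \<le> (a+k) powr \<alpha> - a powr \<alpha>"
proof -
  define h where "h = (\<lambda>t. (t+k) powr \<alpha> - t powr \<alpha>)"
  have "h (b-k) \<le> h a"
  proof (rule deriv_nonneg_imp_mono[where g=h and a="b-k" and b=a and g'="\<lambda>t. \<alpha> * (t+k) powr (\<alpha>-1) - \<alpha> * t powr (\<alpha>-1)"])
    fix x assume x: "x \<in> {b-k..a}"
    then have xp: "x > 0" using assms by auto
    have d1: "((\<lambda>t. (t+k) powr \<alpha>) has_real_derivative \<alpha> * (x+k) powr (\<alpha>-1)) (at x)"
    proof -
      have "((\<lambda>t. t + k) has_real_derivative 1) (at x)"
        by (auto intro!: derivative_eq_intros)
      from DERIV_chain2[OF has_real_derivative_powr[of "x+k" \<alpha>] this] xp assms(4)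
      show ?thesis by simp
    qed
    have d2: "((\<lambda>t. t powr \<alpha>) has_real_derivative \<alpha> * x powr (\<alpha>-1)) (at x)"
      using has_real_derivative_powr[of x \<alpha>] xp by auto
    show "(h has_real_derivative \<alpha> * (x+k) powr (\<alpha>-1) - \<alpha> * x powr (\<alpha>-1)) (at x)"
      unfolding h_def by (rule DERIV_diff[OF d1 d2])
    have "x powr (\<alpha>-1) \<le> (x+k) powr (\<alpha>-1)"
      using powr_mono2[of "\<alpha>-1" x "x+k"] assms xp by auto
    then show "0 \<le> \<alpha> * (x+k) powr (\<alpha>-1) - \<alpha> * x powr (\<alpha>-1)"
      using assms by (simp add: right_diff_distrib[symmetric])
  qed (use assms in auto)
  then show ?thesis unfolding h_def by simp
qed

definition NB :: "'a set set \<Rightarrow> 'a \<Rightarrow> 'a set" where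
  "NB E x = {y. {x,y} \<in> E}"

lemma sg_finite: "simple_graph V E \<Longrightarrow> finite E"
  unfolding simple_graph_def by (meson PowI finite_Pow_iff rev_finite_subset subsetI)

lemma sg_edge: "simple_graph V E \<Longrightarrow> e \<in> E \<Longrightarrow> \<exists>a b. e = {a,b} \<and> a \<noteq> b \<and> a \<in> V \<and> b \<in> V"
  unfolding simple_graph_def by (metis card_2_iff insert_subset)

lemma sg_noloop: "simple_graph V E \<Longrightarrow> {x,x} \<notin> E"
  unfolding simple_graph_def by fastforce

lemma NB_sub: "simple_graph V E \<Longrightarrow> NB E x \<subseteq> V - {x}"
  unfolding NB_def simple_graph_def by fastforce

lemma NB_finite: "simple_graph V E \<Longrightarrow> finite (NB E x)"
  using NB_sub unfolding simple_graph_def by (metis finite_Diff finite_subset)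

lemma deg_NB: assumes "simple_graph V E" shows "degree E x = card (NB E x)"
proof -
  have "bij_betw (\<lambda>y. {x,y}) (NB E x) {e \<in> E. x \<in> e}"
  proof (rule bij_betwI')
    show "\<And>y z. y \<in> NB E x \<Longrightarrow> z \<in> NB E x \<Longrightarrow> ({x, y} = {x, z}) = (y = z)"
      by (metis doubleton_eq_iff)
    show "\<And>y. y \<in> NB E x \<Longrightarrow> {x, y} \<in> {e \<in> E. x \<in> e}" unfolding NB_def by auto
    fix e assume "e \<in> {e \<in> E. x \<in> e}"
    then obtain a b where "e = {a,b}" "e \<in> E" "x \<in> e" using sg_edge[OF assms] by blast
    then show "\<exists>y\<in>NB E x. e = {x, y}" unfolding NB_def by (auto simp: insert_commute)
  qed
  then show ?thesis unfolding degree_def by (simp add: bij_betw_same_card)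
qed

lemma edge_sum: "a \<noteq> b \<Longrightarrow> (\<Sum>w\<in>{a,b}. degree E w) = degree E a + degree E b"
  by simp

lemma chi_dec:
  assumes sg: "simple_graph V E" and uv: "{u,v} \<in> E" "u \<noteq> v"
  shows "chi \<alpha> E = (\<Sum>e\<in>{e\<in>E. u \<notin> e \<and> v \<notin> e}. real (\<Sum>w\<in>e. degree E w) powr \<alpha>)
     + real (degree E u + degree E v) powr \<alpha>
     + (\<Sum>x\<in>NB E u - {v}. real (degree E u + degree E x) powr \<alpha>)
     + (\<Sum>x\<in>NB E v - {u}. real (degree E v + degree E x) powr \<alpha>)"
proof -
  define F where "F e = real (\<Sum>w\<in>e. degree E w) powr \<alpha>" for e
  define E0 where "E0 = {e\<in>E. u \<notin> e \<and> v \<notin> e}"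
  define Eu where "Eu = (\<lambda>x. {u,x}) ` (NB E u - {v})"
  define Ev where "Ev = (\<lambda>x. {v,x}) ` (NB E v - {u})"
  have fin: "finite E" using sg_finite[OF sg] .
  have nl: "\<And>x. {x,x} \<notin> E" using sg_noloop[OF sg] .
  have Esplit: "E = E0 \<union> ({{u,v}} \<union> (Eu \<union> Ev))"
  proof
    show "E \<subseteq> E0 \<union> ({{u,v}} \<union> (Eu \<union> Ev))"
    proof
      fix e assume e: "e \<in> E"
      then obtain a b where ab: "e = {a,b}" "a \<noteq> b" using sg_edge[OF sg] by blast
      show "e \<in> E0 \<union> ({{u,v}} \<union> (Eu \<union> Ev))"
      proof (cases "u \<in> e \<or> v \<in> e")
        case False then show ?thesis using e unfolding E0_def by auto
      next
        case True
        show ?thesis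
        proof (cases "u \<in> e")
          case True
          then obtain x where x: "e = {u,x}" using ab by (auto simp: insert_commute)
          show ?thesis
          proof (cases "x = v")
            case True then show ?thesis using x by simp
          next
            case False
            have "x \<in> NB E u - {v}" using x e False unfolding NB_def by simp
            then have "e \<in> Eu" unfolding Eu_def using x by (rule rev_image_eqI)
            then show ?thesis by simp
          qed
        next
          case False
          then have "v \<in> e" using True by simp
          then obtain x where x: "e = {v,x}" using ab by (auto simp: insert_commute)
          show ?thesis
          proof (cases "x = u")
            case True then show ?thesis using x by (simp add: insert_commute)
          next
            case False
            have "x \<in> NB E v - {u}" using x e False unfolding NB_def by simp
            then have "e \<in> Ev" unfolding Ev_def using x by (rule rev_image_eqI)
            then show ?thesis by simp
          qed
        qed
      qed
    qed
    show "E0 \<union> ({{u,v}} \<union> (Eu \<union> Ev)) \<subseteq> E"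
      using uv unfolding E0_def Eu_def Ev_def NB_def by auto
  qed
  have d1: "Eu \<inter> Ev = {}" using uv unfolding Eu_def Ev_def NB_def
    by (auto simp: doubleton_eq_iff)
  have d2: "{{u,v}} \<inter> (Eu \<union> Ev) = {}" using uv unfolding Eu_def Ev_def NB_def
    by (auto simp: doubleton_eq_iff)
  have d3: "E0 \<inter> ({{u,v}} \<union> (Eu \<union> Ev)) = {}" unfolding E0_def Eu_def Ev_def by auto
  have fEu: "finite Eu" "finite Ev" using fin Esplit by (metis finite_Un)+
  have "chi \<alpha> E = sum F E" unfolding chi_def F_def ..
  also have "\<dots> = sum F E0 + (F {u,v} + (sum F Eu + sum F Ev))"
    apply (subst Esplit)
    apply (subst sum.union_disjoint)
    using fin Esplit d3 apply (auto)[3]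
    apply (subst sum.union_disjoint)
    using fEu d2 apply (auto)[3]
    apply (subst sum.union_disjoint)
    using fEu d1 apply (auto)[3]
    by simp
  also have "sum F Eu = (\<Sum>x\<in>NB E u - {v}. real (degree E u + degree E x) powr \<alpha>)"
    unfolding Eu_def
    apply (subst sum.reindex)
    subgoal by (auto simp: inj_on_def doubleton_eq_iff)
    apply (rule sum.cong[OF refl])
    subgoal for x using nl unfolding F_def NB_def by (cases "x = u"; cases "x = v") auto
    done
  also have "sum F Ev = (\<Sum>x\<in>NB E v - {u}. real (degree E v + degree E x) powr \<alpha>)"
    unfolding Ev_def
    apply (subst sum.reindex)
    subgoal by (auto simp: inj_on_def doubleton_eq_iff)
    apply (rule sum.cong[OF refl])
    subgoal for x using nl unfolding F_def NB_def by (cases "x = u"; cases "x = v") auto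
    done
  also have "F {u,v} = real (degree E u + degree E v) powr \<alpha>"
    unfolding F_def using uv by simp
  finally show ?thesis unfolding E0_def F_def by simp
qed

lemma exit_lemma: "r\<^sup>*\<^sup>* a b \<Longrightarrow> a \<in> S \<Longrightarrow> b \<notin> S \<Longrightarrow> \<exists>x y. r x y \<and> x \<in> S \<and> y \<notin> S"
  by (induction rule: rtranclp_induct) auto

lemma deg_le: assumes "simple_graph V E" "x \<in> V" shows "degree E x \<le> card V - 1"
proof -
  have "card (NB E x) \<le> card (V - {x})"
    using NB_sub[OF assms(1)] assms unfolding simple_graph_def by (intro card_mono) auto
  then show ?thesis using deg_NB[OF assms(1)] assms(2) by simp
qed

lemma improve:
  assumes a1: "1 \<le> \<alpha>" and cg: "connected_graph V E" and uV: "u \<in> V"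
    and umax: "\<forall>x\<in>V. degree E x \<le> degree E u"
    and uv: "{u,v} \<in> E" and vb: "{v,b} \<in> E" and bu: "b \<notin> NB E u" "b \<noteq> u"
  shows "\<exists>E'. connected_graph V E' \<and> card E' = card E \<and> chi \<alpha> E < chi \<alpha> E'"
proof -
  have sg: "simple_graph V E" using cg unfolding connected_graph_def by simp
  have nl: "\<And>x. {x,x} \<notin> E" using sg_noloop[OF sg] .
  have Esym: "\<And>x y. {x,y} \<in> E \<longleftrightarrow> {y,x} \<in> E" by (simp add: insert_commute)
  have fin: "finite E" using sg_finite[OF sg] .
  have uneqv: "u \<noteq> v" using uv nl by auto
  define B where "B = {x \<in> NB E v. x \<notin> NB E u \<and> x \<noteq> u}"
  define R where "R = (\<lambda>x. {v,x}) ` B"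
  define S where "S = (\<lambda>x. {u,x}) ` B"
  define E' where "E' = (E - R) \<union> S"
  have bB: "b \<in> B" using vb bu unfolding B_def NB_def by simp
  have BNv: "B \<subseteq> NB E v" unfolding B_def by auto
  have finB: "finite B" using NB_finite[OF sg] BNv finite_subset by blast
  have uB: "u \<notin> B" unfolding B_def by simp
  have vB: "v \<notin> B" unfolding B_def NB_def using nl by simp
  have BV: "B \<subseteq> V" using BNv NB_sub[OF sg] by blast
  have mem: "\<And>x y. {x,y} \<in> E' \<longleftrightarrow> ({x,y} \<in> E \<and> \<not>(x = v \<and> y \<in> B) \<and> \<not>(y = v \<and> x \<in> B))
      \<or> (x = u \<and> y \<in> B) \<or> (y = u \<and> x \<in> B)"
    unfolding E'_def R_def S_def by (auto simp: doubleton_eq_iff image_iff)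
  have RE: "R \<subseteq> E" unfolding R_def B_def NB_def by auto
  have SE: "S \<inter> E = {}" unfolding S_def B_def NB_def by auto
  have cardR: "card R = card B" unfolding R_def by (rule card_image) (auto simp: inj_on_def doubleton_eq_iff)
  have cardS: "card S = card B" unfolding S_def by (rule card_image) (auto simp: inj_on_def doubleton_eq_iff)
  have finS: "finite S" unfolding S_def using finB by simp
  have cardE': "card E' = card E"
  proof -
    have "card E' = card (E - R) + card S" unfolding E'_def
      using fin finS SE by (intro card_Un_disjoint) auto
    also have "card (E - R) = card E - card R" using RE fin by (simp add: card_Diff_subset finite_subset)
    also have "card R \<le> card E" using RE fin by (simp add: card_mono)
    ultimately show ?thesis using cardR cardS by simp
  qed
  have sg': "simple_graph V E'"
  proof -
    have "\<forall>e\<in>S. e \<subseteq> V \<and> card e = 2" unfolding S_def using BV uV uB by (auto simp: card_insert_if)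
    then show ?thesis using sg unfolding simple_graph_def E'_def by blast
  qed
  have N1: "NB E' u = NB E u \<union> B"
    unfolding NB_def using mem uB uneqv vB by (auto simp: B_def NB_def)
  have N2: "NB E' v = NB E v - B"
    unfolding NB_def using mem uB uneqv vB by (auto simp: B_def NB_def)
  have N3: "\<And>x. x \<noteq> u \<Longrightarrow> x \<noteq> v \<Longrightarrow> x \<notin> B \<Longrightarrow> NB E' x = NB E x"
    unfolding NB_def using mem by auto
  have N4: "\<And>x. x \<in> B \<Longrightarrow> NB E' x = insert u (NB E x - {v})"
  proof -
    fix x assume xB: "x \<in> B"
    then have "x \<noteq> u" "x \<noteq> v" using uB vB by auto
    then show "NB E' x = insert u (NB E x - {v})"
      unfolding NB_def using mem[of x] xB by auto
  qed
  have dU: "degree E' u = degree E u + card B"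
  proof -
    have "card (NB E u \<union> B) = card (NB E u) + card B"
      using NB_finite[OF sg] finB by (intro card_Un_disjoint) (auto simp: B_def)
    then show ?thesis using deg_NB[OF sg'] deg_NB[OF sg] N1 by simp
  qed
  have dV: "degree E' v + card B = degree E v"
  proof -
    have "card (NB E v - B) = card (NB E v) - card B"
      using BNv finB by (simp add: card_Diff_subset)
    moreover have "card B \<le> card (NB E v)" using BNv NB_finite[OF sg] by (simp add: card_mono)
    ultimately show ?thesis using deg_NB[OF sg'] deg_NB[OF sg] N2 by simp
  qed
  have dO: "\<And>x. x \<noteq> u \<Longrightarrow> x \<noteq> v \<Longrightarrow> degree E' x = degree E x"
  proof -
    fix x assume xu: "x \<noteq> u" and xv: "x \<noteq> v"
    show "degree E' x = degree E x"
    proof (cases "x \<in> B")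
      case False then show ?thesis using N3 xu xv deg_NB[OF sg'] deg_NB[OF sg] by simp
    next
      case True
      have vx: "v \<in> NB E x" using True unfolding B_def NB_def by (simp add: insert_commute)
      have ux: "u \<notin> NB E x" using True unfolding B_def NB_def by (simp add: insert_commute)
      have "card (insert u (NB E x - {v})) = card (NB E x)"
        using vx ux NB_finite[OF sg, of x] by (simp add: card_Diff_singleton) (metis card_0_eq empty_iff Suc_pred neq0_conv)
      then show ?thesis using N4[OF True] deg_NB[OF sg'] deg_NB[OF sg] by simp
    qed
  qed
  have uvE': "{u,v} \<in> E'" using mem uv uB vB uneqv by simp
  have step: "\<And>a c. adj E a c \<Longrightarrow> (adj E')\<^sup>*\<^sup>* a c"
  proof -
    fix a c assume "adj E a c"
    then have ac: "{a,c} \<in> E" unfolding adj_def .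
    show "(adj E')\<^sup>*\<^sup>* a c"
    proof (cases "{a,c} \<in> E'")
      case True then show ?thesis unfolding adj_def by auto
    next
      case False
      then have "(a = v \<and> c \<in> B) \<or> (c = v \<and> a \<in> B)" using mem[of a c] ac by auto
      then show ?thesis
      proof
        assume h: "a = v \<and> c \<in> B"
        have "adj E' v u" unfolding adj_def using uvE' by (simp add: insert_commute)
        moreover have "adj E' u c" unfolding adj_def using mem h by simp
        ultimately show ?thesis using h by (meson converse_rtranclp_into_rtranclp r_into_rtranclp)
      next
        assume h: "c = v \<and> a \<in> B"
        have "adj E' u v" unfolding adj_def using uvE' by simp
        moreover have "adj E' a u" unfolding adj_def using mem h by simp
        ultimately show ?thesis using h by (meson converse_rtranclp_into_rtranclp r_into_rtranclp)
      qed
    qed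
  qed
  have conn: "\<And>a c. (adj E)\<^sup>*\<^sup>* a c \<Longrightarrow> (adj E')\<^sup>*\<^sup>* a c"
  proof -
    fix a c assume "(adj E)\<^sup>*\<^sup>* a c"
    then show "(adj E')\<^sup>*\<^sup>* a c"
      by (induction rule: rtranclp_induct) (auto dest: step intro: rtranclp_trans)
  qed
  have cg': "connected_graph V E'"
    using cg sg' conn unfolding connected_graph_def by blast
  define f where "f t = t powr \<alpha>" for t :: real
  define p where "p = real (degree E u)"
  define q where "q = real (degree E v)"
  define k where "k = real (card B)"
  define g where "g x = real (degree E x)" for x
  define A where "A = NB E u \<inter> NB E v"
  define C where "C = NB E u - NB E v - {v}"
  have finA: "finite A" "finite C" using NB_finite[OF sg] unfolding A_def C_def by auto
  have sU: "NB E u - {v} = A \<union> C" "A \<inter> C = {}" using nl unfolding A_def C_def NB_def by auto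
  have sV: "NB E v - {u} = A \<union> B" "A \<inter> B = {}" unfolding A_def B_def
    using nl unfolding NB_def by auto
  have sU': "NB E' u - {v} = (A \<union> C) \<union> B" "(A \<union> C) \<inter> B = {}"
    using N1 sU vB nl unfolding A_def B_def C_def NB_def by auto
  have sV': "NB E' v - {u} = A"
    using N2 unfolding A_def B_def using nl unfolding NB_def by auto
  have Auv: "\<And>x. x \<in> A \<Longrightarrow> x \<noteq> u \<and> x \<noteq> v" unfolding A_def NB_def using nl by auto
  have Cuv: "\<And>x. x \<in> C \<Longrightarrow> x \<noteq> u \<and> x \<noteq> v" unfolding C_def NB_def using nl by auto
  have Buv: "\<And>x. x \<in> B \<Longrightarrow> x \<noteq> u \<and> x \<noteq> v" using uB vB by auto
  have E0: "{e\<in>E'. u \<notin> e \<and> v \<notin> e} = {e\<in>E. u \<notin> e \<and> v \<notin> e}"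
    unfolding E'_def R_def S_def by auto
  have X0: "(\<Sum>e\<in>{e\<in>E'. u \<notin> e \<and> v \<notin> e}. real (\<Sum>w\<in>e. degree E' w) powr \<alpha>)
      = (\<Sum>e\<in>{e\<in>E. u \<notin> e \<and> v \<notin> e}. real (\<Sum>w\<in>e. degree E w) powr \<alpha>)"
    unfolding E0 by (intro sum.cong refl arg_cong[where f="\<lambda>t. real t powr \<alpha>"]) (auto intro: dO)
  have M: "degree E' u + degree E' v = degree E u + degree E v" using dU dV by simp
  have old: "chi \<alpha> E = (\<Sum>e\<in>{e\<in>E. u \<notin> e \<and> v \<notin> e}. real (\<Sum>w\<in>e. degree E w) powr \<alpha>)
     + real (degree E u + degree E v) powr \<alpha>
     + ((\<Sum>x\<in>A. f (p + g x)) + (\<Sum>x\<in>C. f (p + g x)) + (\<Sum>x\<in>A. f (q + g x)) + (\<Sum>x\<in>B. f (q + g x)))"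
    unfolding chi_dec[OF sg uv uneqv] sU(1) sV(1)
    using finA finB sU(2) sV(2)
    by (simp add: sum.union_disjoint f_def p_def q_def g_def)
  have new: "chi \<alpha> E' = (\<Sum>e\<in>{e\<in>E. u \<notin> e \<and> v \<notin> e}. real (\<Sum>w\<in>e. degree E w) powr \<alpha>)
     + real (degree E u + degree E v) powr \<alpha>
     + ((\<Sum>x\<in>A. f (p + k + g x)) + (\<Sum>x\<in>C. f (p + k + g x)) + (\<Sum>x\<in>B. f (p + k + g x)) + (\<Sum>x\<in>A. f (q - k + g x)))"
  proof -
    have e1: "(\<Sum>x\<in>NB E' u - {v}. real (degree E' u + degree E' x) powr \<alpha>)
        = (\<Sum>x\<in>A. f (p + k + g x)) + (\<Sum>x\<in>C. f (p + k + g x)) + (\<Sum>x\<in>B. f (p + k + g x))"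
    proof -
      have "(\<Sum>x\<in>NB E' u - {v}. real (degree E' u + degree E' x) powr \<alpha>)
          = (\<Sum>x\<in>(A \<union> C) \<union> B. f (p + k + g x))"
        unfolding sU'(1) using Auv Cuv Buv
        by (intro sum.cong refl) (auto simp: f_def p_def k_def g_def dU dO)
      also have "\<dots> = (\<Sum>x\<in>A. f (p + k + g x)) + (\<Sum>x\<in>C. f (p + k + g x)) + (\<Sum>x\<in>B. f (p + k + g x))"
        using finA finB sU(2) sU'(2) by (simp add: sum.union_disjoint)
      finally show ?thesis .
    qed
    have e2: "(\<Sum>x\<in>NB E' v - {u}. real (degree E' v + degree E' x) powr \<alpha>)
        = (\<Sum>x\<in>A. f (q - k + g x))"
    proof -
      have "real (degree E' v) = q - k" using dV unfolding q_def k_def by (simp flip: of_nat_add)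
      then show ?thesis unfolding sV'
        using Auv by (intro sum.cong refl) (auto simp: f_def g_def dO)
    qed
    show ?thesis unfolding chi_dec[OF sg' uvE' uneqv] X0 M e1 e2 by simp
  qed
  have a0: "0 < \<alpha>" using a1 by simp
  have gnn: "\<And>x. 0 \<le> g x" unfolding g_def by simp
  have qp: "q \<le> p" unfolding q_def p_def using umax uv sg_edge[OF sg uv] by (metis doubleton_eq_iff insertCI of_nat_mono)
  have kpos: "0 < k" unfolding k_def using finB bB by (simp add: card_gt_0_iff) (use bB in blast)
  have qk: "1 \<le> q - k"
  proof -
    have "u \<in> NB E' v" using uvE' unfolding NB_def by (simp add: insert_commute)
    then have "1 \<le> degree E' v" using deg_NB[OF sg'] NB_finite[OF sg', of v]
      by (metis One_nat_def Suc_leI card_gt_0_iff empty_iff)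
    then show ?thesis using dV unfolding q_def k_def by (simp flip: of_nat_add)
  qed
  have hA: "(\<Sum>x\<in>A. f (p + g x) + f (q + g x)) \<le> (\<Sum>x\<in>A. f (p + k + g x) + f (q - k + g x))"
  proof (rule sum_mono)
    fix x assume "x \<in> A"
    have "f (q + g x) - f (q + g x - k) \<le> f (p + g x + k) - f (p + g x)"
      unfolding f_def using qk qp kpos gnn[of x] by (intro conv_powr a1) auto
    then show "f (p + g x) + f (q + g x) \<le> f (p + k + g x) + f (q - k + g x)"
      by (simp add: algebra_simps)
  qed
  have hC: "(\<Sum>x\<in>C. f (p + g x)) \<le> (\<Sum>x\<in>C. f (p + k + g x))"
    by (rule sum_mono) (unfold f_def, rule powr_mono2, use a0 kpos gnn qp qk in auto)
  have hB: "(\<Sum>x\<in>B. f (q + g x)) < (\<Sum>x\<in>B. f (p + k + g x))"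
  proof (rule sum_strict_mono)
    show "finite B" by (rule finB)
    show "B \<noteq> {}" using bB by blast
    fix x assume "x \<in> B"
    show "f (q + g x) < f (p + k + g x)"
      unfolding f_def by (rule powr_less_mono2) (use a0 kpos gnn[of x] qp qk in auto)
  qed
  have "chi \<alpha> E < chi \<alpha> E'"
    unfolding old new using hA hC hB by (simp add: sum.distrib)
  then show ?thesis using cg' cardE' by blast
qed

theorem corollary3:
  fixes \<alpha> :: real and V :: "'a set" and E :: "'a set set"
  assumes "\<alpha> \<ge> 1"
    and "connected_graph V E"
    and "\<And>E'. connected_graph V E' \<Longrightarrow> card E' = card E \<Longrightarrow> chi \<alpha> E' \<le> chi \<alpha> E"
  shows "max_degree V E = card V - 1"
proof (rule ccontr)
  assume ne: "max_degree V E \<noteq> card V - 1"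
  have sg: "simple_graph V E" and Vne: "V \<noteq> {}" and con: "\<forall>u\<in>V. \<forall>v\<in>V. (adj E)\<^sup>*\<^sup>* u v"
    using assms(2) unfolding connected_graph_def by auto
  have finV: "finite V" using sg unfolding simple_graph_def by simp
  obtain u where uV: "u \<in> V" and uD: "degree E u = max_degree V E"
    unfolding max_degree_def using finV Vne
    by (metis (no_types, lifting) Max_in finite_imageI image_iff image_is_empty)
  have umax: "\<forall>x\<in>V. degree E x \<le> degree E u"
    using uD finV unfolding max_degree_def by simp
  have "degree E u < card V - 1" using deg_le[OF sg uV] ne uD by simp
  then have "card (NB E u) < card (V - {u})" using deg_NB[OF sg] finV uV by simp
  then obtain w where wV: "w \<in> V - {u}" and wN: "w \<notin> NB E u"
  proof -
    have "\<not> (V - {u} \<subseteq> NB E u)"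
      using \<open>card (NB E u) < card (V - {u})\<close> NB_finite[OF sg, of u] card_mono by (metis not_le)
    then show ?thesis using that by blast
  qed
  have "(adj E)\<^sup>*\<^sup>* u w" using con uV wV by blast
  then obtain a c where ac: "adj E a c" "a \<in> insert u (NB E u)" "c \<notin> insert u (NB E u)"
    using exit_lemma[of "adj E" u w "insert u (NB E u)"] wV wN by blast
  have "a \<noteq> u" using ac unfolding adj_def NB_def by auto
  then have ua: "{u,a} \<in> E" using ac unfolding NB_def by simp
  have ac': "{a,c} \<in> E" using ac unfolding adj_def by simp
  obtain E' where "connected_graph V E'" "card E' = card E" "chi \<alpha> E < chi \<alpha> E'"
    using improve[OF assms(1) assms(2) uV umax ua ac'] ac by auto
  then show False using assms(3) by force
qed

end
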